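(* Let $X$ be an FK-space containing $\phi$ and suppose that $\lim_{n\to\infty}\frac{q(n)-i+1}{q(n)-p(n)}=1$ for each $i$. Then: (i) $X^{\beta}\subseteq X^{d}\subseteq X^{d[b]}\subseteq X^f$; (ii) if $X$ is a $\sigma_p^q[K]$-space then $X^f=X^d$; (iii) if $X$ is an AD-space then $X^{d[b]}=X^d$.
   Context: An FK-space is a vector subspace of the space $w$ of all complex sequences with a complete metrizable locally convex topology in which coordinate functionals are continuous; $X'$ is its continuous dual. $\delta^j$ has $1$ in position $j$ and $0$ elsewhere; $\phi=\operatorname{span}\{\delta^j\}$. $p(n)<q(n)$ are nonnegative integer sequences with $q(n)\to\infty$. $\sigma_p^q[s]=\{x : \lim_n\frac{1}{q(n)-p(n)}\sum_{k=p(n)+1}^{q(n)}\sum_{j=1}^k x_j\text{ exists}\}$, $\sigma_p^q[b]=\{x:\sup_n|\frac{1}{q(n)-p(n)}\sum_{k=p(n)+1}^{q(n)}\sum_{j=1}^k x_j|<\infty\}$. For $x,y\in w$, $x\cdot y=(x_ny_n)$. Duals: $X^f=\{(f(\delta^k))_k : f\in X'\}$; $X^\beta=\{x : \sum_k x_ky_k \text{ converges for all } y\in X\}$; $X^d=\{x : x\cdot y\in\sigma_p^q[s]\ \forall y\in X\}$; $X^{d[b]}=\{x : x\cdot y\in\sigma_p^q[b]\ \forall y\in X\}$. $X$ is an AD-space if $\phi$ is dense in $X$. With $x^{(k)}=\sum_{j=1}^k x_j\delta^j$, $X$ is a $\sigma_p^q[K]$-space if $\frac{1}{q(n)-p(n)}\sum_{k=p(n)+1}^{q(n)}x^{(k)}\to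 x$ in $X$ for every $x\in X$. *)

theory Defs
  imports "HOL-Analysis.Analysis"
begin

text \<open>Sequences are indexed from 0: the paper's coordinate x_j (j \<ge> 1) is x (j - 1).
  So the partial sum of the first k terms is the sum over j < k.\<close>

type_synonym seq = "nat \<Rightarrow> complex"

definition delta :: "nat \<Rightarrow> seq" where
  "delta j = (\<lambda>i. if i = j then 1 else 0)"

definition sscale :: "complex \<Rightarrow> seq \<Rightarrow> seq" where
  "sscale c x = (\<lambda>i. c * x i)"

definition sadd :: "seq \<Rightarrow> seq \<Rightarrow> seq" where
  "sadd x y = (\<lambda>i. x i + y i)"

definition szero :: seq where
  "szero = (\<lambda>i. 0)"

definition phi :: "seq set" where
  "phi = {x. \<exists>F c. finite F \<and> x = (\<lambda>i. \<Sum>j\<in>F. c j * delta j i)}"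

definition is_subspace_w :: "seq set \<Rightarrow> bool" where
  "is_subspace_w X \<longleftrightarrow> szero \<in> X \<and> (\<forall>x\<in>X. \<forall>y\<in>X. sadd x y \<in> X)
     \<and> (\<forall>c. \<forall>x\<in>X. sscale c x \<in> X)"

definition convex_w :: "seq set \<Rightarrow> bool" where
  "convex_w V \<longleftrightarrow> (\<forall>x\<in>V. \<forall>y\<in>V. \<forall>t::real. 0 \<le> t \<and> t \<le> 1 \<longrightarrow>
      (\<lambda>i. complex_of_real t * x i + complex_of_real (1 - t) * y i) \<in> V)"

definition lc_tvs :: "seq set \<Rightarrow> seq topology \<Rightarrow> bool" where
  "lc_tvs X T \<longleftrightarrow> is_subspace_w X \<and> topspace T = X
     \<and> continuous_map (prod_topology T T) T (\<lambda>(x, y). sadd x y)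
     \<and> continuous_map (prod_topology (euclidean :: complex topology) T) T (\<lambda>(c, x). sscale c x)
     \<and> (\<forall>U. openin T U \<and> szero \<in> U \<longrightarrow> (\<exists>V. openin T V \<and> szero \<in> V \<and> V \<subseteq> U \<and> convex_w V))"

definition FK_space :: "seq set \<Rightarrow> seq topology \<Rightarrow> bool" where
  "FK_space X T \<longleftrightarrow> lc_tvs X T \<and> completely_metrizable_space T
     \<and> (\<forall>j. continuous_map T (euclidean :: complex topology) (\<lambda>x. x j))"

definition cdual :: "seq set \<Rightarrow> seq topology \<Rightarrow> (seq \<Rightarrow> complex) set" where
  "cdual X T = {f. (\<forall>x\<in>X. \<forall>y\<in>X. f (sadd x y) = f x + f y)
                 \<and> (\<forall>c. \<forall>x\<in>X. f (sscale c x) = c * f x)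
                 \<and> continuous_map T (euclidean :: complex topology) f}"

definition f_dual :: "seq set \<Rightarrow> seq topology \<Rightarrow> seq set" where
  "f_dual X T = {(\<lambda>k. f (delta k)) | f. f \<in> cdual X T}"

definition beta_dual :: "seq set \<Rightarrow> seq set" where
  "beta_dual X = {x. \<forall>y\<in>X. summable (\<lambda>k. x k * y k)}"

definition dmean :: "(nat \<Rightarrow> nat) \<Rightarrow> (nat \<Rightarrow> nat) \<Rightarrow> seq \<Rightarrow> nat \<Rightarrow> complex" where
  "dmean p q x n = (1 / of_nat (q n - p n)) * (\<Sum>k\<in>{p n<..q n}. \<Sum>j<k. x j)"

definition sigma_s :: "(nat \<Rightarrow> nat) \<Rightarrow> (nat \<Rightarrow> nat) \<Rightarrow> seq set" where
  "sigma_s p q = {x. convergent (dmean p q x)}"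

definition sigma_b :: "(nat \<Rightarrow> nat) \<Rightarrow> (nat \<Rightarrow> nat) \<Rightarrow> seq set" where
  "sigma_b p q = {x. bdd_above (range (\<lambda>n. norm (dmean p q x n)))}"

definition smult :: "seq \<Rightarrow> seq \<Rightarrow> seq" where
  "smult x y = (\<lambda>n. x n * y n)"

definition d_dual :: "(nat \<Rightarrow> nat) \<Rightarrow> (nat \<Rightarrow> nat) \<Rightarrow> seq set \<Rightarrow> seq set" where
  "d_dual p q X = {x. \<forall>y\<in>X. smult x y \<in> sigma_s p q}"

definition db_dual :: "(nat \<Rightarrow> nat) \<Rightarrow> (nat \<Rightarrow> nat) \<Rightarrow> seq set \<Rightarrow> seq set" where
  "db_dual p q X = {x. \<forall>y\<in>X. smult x y \<in> sigma_b p q}"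

definition AD_space :: "seq set \<Rightarrow> seq topology \<Rightarrow> bool" where
  "AD_space X T \<longleftrightarrow> T closure_of phi = topspace T"

definition sect :: "seq \<Rightarrow> nat \<Rightarrow> seq" where
  "sect x k = (\<lambda>i. if i < k then x i else 0)"

definition sigmaK_space :: "(nat \<Rightarrow> nat) \<Rightarrow> (nat \<Rightarrow> nat) \<Rightarrow> seq set \<Rightarrow> seq topology \<Rightarrow> bool" where
  "sigmaK_space p q X T \<longleftrightarrow> (\<forall>x\<in>X. limitin T
     (\<lambda>n. (\<lambda>i. (1 / of_nat (q n - p n)) * (\<Sum>k\<in>{p n<..q n}. sect x k i))) x sequentially)"

end

theory Submission
  imports Defs
begin

lemma cluster:
  fixes fs :: "nat \<Rightarrow> 'a \<Rightarrow> complex" and I :: "'a set" and B :: "'a \<Rightarrow> real"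
  assumes bnd: "\<And>n y. y \<in> I \<Longrightarrow> cmod (fs n y) \<le> B y"
  shows "\<exists>g. \<forall>F \<epsilon> m. finite F \<and> F \<subseteq> I \<and> \<epsilon> > 0 \<longrightarrow> (\<exists>n\<ge>m. \<forall>y\<in>F. cmod (fs n y - g y) < \<epsilon>)"
proof -
  define K where "K = product_topology (\<lambda>y. top_of_set (cball (0::complex) (B y))) I"
  have cK: "compact_space K"
    unfolding K_def compact_space_product_topology
    by (simp add: compact_space_subtopology)
  define h where "h n = restrict (fs n) I" for n
  have hK: "h n \<in> topspace K" for n
    using bnd by (auto simp: K_def h_def)
  define C where "C m = K closure_of (h ` {m..})" for m
  have "(\<Inter>m. C m) \<noteq> {}"
  proof (rule compact_space_imp_nest[OF cK])
    show "closedin K (C m)" for m by (simp add: C_def)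
    show "C m \<noteq> {}" for m
      using closure_of_subset[of "h ` {m..}" K] hK by (auto simp: C_def)
    show "decseq C"
      unfolding decseq_def C_def by (intro allI impI closure_of_mono) auto
  qed
  then obtain g where g: "\<And>m. g \<in> C m" by blast
  have gK: "g \<in> topspace K" using g[of 0] by (simp add: C_def in_closure_of)
  show ?thesis
  proof (rule exI, intro allI impI)
    fix F \<epsilon> m assume a: "finite F \<and> F \<subseteq> I \<and> (\<epsilon>::real) > 0"
    define U where "U = (\<Inter>y\<in>F. {k \<in> topspace K. k y \<in> ball (g y) \<epsilon>}) \<inter> topspace K"
    have cm: "continuous_map K euclidean (\<lambda>k. k y)" if "y \<in> I" for y
      unfolding K_def
      using continuous_map_product_projection[OF that, of "\<lambda>y. top_of_set (cball (0::complex) (B y))"]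
      using continuous_map_into_fulltopology by blast
    have "openin K U"
      unfolding U_def
      apply (rule openin_INT)
      using a openin_continuous_map_preimage[OF cm, of _ "ball (g _) \<epsilon>"] by (auto simp del: mem_ball)
    moreover have "g \<in> U" using gK a by (auto simp: U_def)
    ultimately obtain k where "k \<in> h ` {m..}" "k \<in> U"
      using g[of m] unfolding C_def in_closure_of by blast
    then obtain n where n: "n \<ge> m" "h n \<in> U" by auto
    show "\<exists>n\<ge>m. \<forall>y\<in>F. cmod (fs n y - g y) < \<epsilon>"
      using n a by (auto simp: U_def h_def dist_norm norm_minus_commute subset_iff)
  qed
qed


lemma FK_basic:
  assumes "FK_space X T"
  shows "topspace T = X" "szero \<in> X" "\<And>x y. x \<in> X \<Longrightarrow> y \<in> X \<Longrightarrow> sadd x y \<in> X"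
    "\<And>c x. x \<in> X \<Longrightarrow> sscale c x \<in> X"
    "continuous_map (prod_topology T T) T (\<lambda>(x, y). sadd x y)"
    "continuous_map (prod_topology (euclidean :: complex topology) T) T (\<lambda>(c, x). sscale c x)"
    "\<And>j. continuous_map T (euclidean :: complex topology) (\<lambda>x. x j)"
    "completely_metrizable_space T"
  using assms by (auto simp: FK_space_def lc_tvs_def is_subspace_w_def)

lemma cont_trans:
  assumes FK: "FK_space X T" and y0: "y0 \<in> X"
  shows "continuous_map T T (\<lambda>v. sadd v y0)"
proof -
  have "continuous_map T (prod_topology T T) (\<lambda>v. (v, y0))"
    using y0 FK_basic(1)[OF FK] by (intro continuous_map_pairedI) auto
  from continuous_map_compose[OF this FK_basic(5)[OF FK]] show ?thesis by (simp add: o_def)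
qed

lemma cont_scale:
  assumes FK: "FK_space X T"
  shows "continuous_map T T (\<lambda>v. sscale c v)"
proof -
  have "continuous_map T (prod_topology (euclidean :: complex topology) T) (\<lambda>v. (c, v))"
    by (intro continuous_map_pairedI) auto
  from continuous_map_compose[OF this FK_basic(6)[OF FK]] show ?thesis by (simp add: o_def)
qed

lemma cdual_zero: "FK_space X T \<Longrightarrow> f \<in> cdual X T \<Longrightarrow> f szero = 0"
proof -
  assume FK: "FK_space X T" and f: "f \<in> cdual X T"
  have "f (sscale 0 szero) = 0 * f szero" using f FK_basic(2)[OF FK] by (auto simp: cdual_def)
  moreover have "sscale 0 szero = szero" by (simp add: sscale_def szero_def)
  ultimately show ?thesis by simp
qed

lemma cdual_diff: "FK_space X T \<Longrightarrow> f \<in> cdual X T \<Longrightarrow> a \<in> X \<Longrightarrow> b \<in> X \<Longrightarrow>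
   f (sadd a (sscale (-1) b)) = f a - f b"
proof -
  assume FK: "FK_space X T" and f: "f \<in> cdual X T" and ab: "a \<in> X" "b \<in> X"
  have "sscale (-1) b \<in> X" using FK_basic(4)[OF FK] ab by auto
  then have "f (sadd a (sscale (-1) b)) = f a + f (sscale (-1) b)" using f ab by (auto simp: cdual_def)
  also have "f (sscale (-1) b) = - f b" using f ab by (auto simp: cdual_def)
  finally show ?thesis by simp
qed

lemma ubp:
  assumes FK: "FK_space X T" and fs: "\<And>n. fs n \<in> cdual X T"
    and bd: "\<And>y. y \<in> X \<Longrightarrow> \<exists>M. \<forall>n. cmod (fs n y) \<le> M"
  shows "\<exists>V. openin T V \<and> szero \<in> V \<and> (\<forall>n. \<forall>v\<in>V. cmod (fs n v) \<le> 1)"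
proof -
  note top = FK_basic(1)[OF FK]
  have fc: "continuous_map T euclidean (fs n)" for n using fs by (auto simp: cdual_def)
  define A where "A m = (\<Inter>n. {y \<in> topspace T. fs n y \<in> cball 0 (real m)})" for m
  have clA: "closedin T (A m)" for m
    unfolding A_def
  proof (rule closedin_Inter)
    fix S assume "S \<in> range (\<lambda>n. {y \<in> topspace T. fs n y \<in> cball 0 (real m)})"
    then obtain n where S: "S = {y \<in> topspace T. fs n y \<in> cball 0 (real m)}" by blast
    have "closedin euclidean (cball (0::complex) (real m))" by simp
    from closedin_continuous_map_preimage[OF fc this] show "closedin T S" unfolding S .
  qed auto
  have unA: "\<Union>(range A) = topspace T"
  proof
    show "\<Union>(range A) \<subseteq> topspace T" by (auto simp: A_def)
    show "topspace T \<subseteq> \<Union>(range A)"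
    proof
      fix y assume y: "y \<in> topspace T"
      then obtain M where M: "\<forall>n. cmod (fs n y) \<le> M" using bd top by auto
      obtain m where "M \<le> real m" using real_arch_simple by blast
      then have "y \<in> A m" using M y by (auto simp: A_def intro: order_trans)
      then show "y \<in> \<Union>(range A)" by blast
    qed
  qed
  have "\<exists>m. T interior_of A m \<noteq> {}"
  proof (rule ccontr)
    assume "\<not> ?thesis"
    then have "T interior_of \<Union>(range A) = {}"
      by (intro Baire_category_alt) (use FK_basic(8)[OF FK] clA in auto)
    then show False using unA FK_basic(2)[OF FK] top by (metis interior_of_topspace empty_iff)
  qed
  then obtain m y0 where y0: "y0 \<in> T interior_of A m" by blast
  define W where "W = T interior_of A m"
  have W: "openin T W" "W \<subseteq> A m" "y0 \<in> W" using y0 interior_of_subset[of T "A m"] by (auto simp: W_def)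
  have y0X: "y0 \<in> X" using W A_def top by auto
  define V' where "V' = {v \<in> topspace T. sadd v y0 \<in> W}"
  have V'o: "openin T V'" unfolding V'_def by (rule openin_continuous_map_preimage[OF cont_trans[OF FK y0X] W(1)])
  have bV': "cmod (fs n v) \<le> 2 * real m" if v: "v \<in> V'" for n v
  proof -
    have vX: "v \<in> X" using v top by (auto simp: V'_def)
    have "fs n (sadd v y0) = fs n v + fs n y0" using fs[of n] vX y0X by (auto simp: cdual_def)
    then have "fs n v = fs n (sadd v y0) - fs n y0" by simp
    moreover have "cmod (fs n (sadd v y0)) \<le> real m" using v W(2) by (auto simp: V'_def A_def)
    moreover have "cmod (fs n y0) \<le> real m" using W by (auto simp: A_def)
    ultimately show ?thesis by (metis norm_triangle_ineq4 add_mono mult_2 order_trans)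
  qed
  define c :: complex where "c = of_real (2 * real m + 1)"
  define V where "V = {v \<in> topspace T. sscale c v \<in> V'}"
  have Vo: "openin T V" unfolding V_def by (rule openin_continuous_map_preimage[OF cont_scale[OF FK] V'o])
  have "sadd szero y0 = y0" by (simp add: sadd_def szero_def)
  moreover have "sscale c szero = szero" by (simp add: sscale_def szero_def)
  ultimately have z: "szero \<in> V" using W FK_basic(2)[OF FK] top by (auto simp: V_def V'_def)
  have "cmod (fs n v) \<le> 1" if v: "v \<in> V" for n v
  proof -
    have vX: "v \<in> X" using v top by (auto simp: V_def)
    have "fs n (sscale c v) = c * fs n v" using fs[of n] vX by (auto simp: cdual_def)
    moreover have "cmod (fs n (sscale c v)) \<le> 2 * real m" using bV' v by (auto simp: V_def)
    moreover have "cmod c = 2 * real m + 1" unfolding c_def by (simp only: norm_of_real)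
    ultimately have "(2 * real m + 1) * cmod (fs n v) \<le> 2 * real m"
      by (simp add: norm_mult)
    then have "cmod (fs n v) \<le> 2*real m/(2*real m+1)"
      by (simp add: pos_le_divide_eq mult.commute add_pos_nonneg)
    also have "\<dots> \<le> 1" by simp
    finally show ?thesis .
  qed
  then show ?thesis using Vo z by blast
qed

lemma cont_from_bound:
  assumes FK: "FK_space X T"
    and add: "\<forall>x\<in>X. \<forall>y\<in>X. g (sadd x y) = g x + g y"
    and sc: "\<forall>c. \<forall>x\<in>X. g (sscale c x) = c * g x"
    and V: "openin T V" "szero \<in> V" "\<forall>v\<in>V. cmod (g v) \<le> 1"
  shows "continuous_map T euclidean g"
  unfolding continuous_map_eq_topcontinuous_at topcontinuous_at_def
proof (intro ballI conjI allI impI)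
  note top = FK_basic(1)[OF FK]
  fix x0 assume x0: "x0 \<in> topspace T"
  then show "x0 \<in> topspace T" .
  show "g \<in> topspace T \<rightarrow> topspace euclidean" by simp
  fix Op assume Op: "openin euclidean Op \<and> g x0 \<in> Op"
  then obtain e where e: "e > 0" "ball (g x0) e \<subseteq> Op" by (meson open_contains_ball open_openin)
  have x0X: "x0 \<in> X" using x0 top by simp
  have mx0: "sscale (-1) x0 \<in> X" using FK_basic(4)[OF FK] x0X by auto
  define c :: complex where "c = of_real (2 / e)"
  define U where "U = {y \<in> topspace T. sscale c (sadd y (sscale (-1) x0)) \<in> V}"
  have "continuous_map T T (\<lambda>y. sscale c (sadd y (sscale (-1) x0)))"
    using continuous_map_compose[OF cont_trans[OF FK mx0] cont_scale[OF FK]] by (simp add: o_def)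
  then have Uo: "openin T U" unfolding U_def using V(1) by (rule openin_continuous_map_preimage)
  have "sscale c (sadd x0 (sscale (-1) x0)) = szero" by (simp add: sscale_def sadd_def szero_def)
  then have "x0 \<in> U" using x0 V by (simp add: U_def)
  moreover have "g y \<in> Op" if y: "y \<in> U" for y
  proof -
    have yX: "y \<in> X" using y top by (simp add: U_def)
    have d: "sadd y (sscale (-1) x0) \<in> X" using FK_basic(3)[OF FK] yX mx0 by auto
    have "g (sscale c (sadd y (sscale (-1) x0))) = c * (g y - g x0)"
      using sc d add yX mx0 x0X by auto
    moreover have "cmod (g (sscale c (sadd y (sscale (-1) x0)))) \<le> 1" using y V by (auto simp: U_def)
    moreover have "cmod (c * (g y - g x0)) = (2/e) * cmod (g y - g x0)"
      using e by (simp add: c_def norm_mult del: of_real_divide)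
    ultimately have "(2/e) * cmod (g y - g x0) \<le> 1" by simp
    then have "cmod (g y - g x0) \<le> e/2" using e by (simp add: field_simps)
    then have "g y \<in> ball (g x0) e" using e by (simp add: dist_norm norm_minus_commute)
    then show ?thesis using e by blast
  qed
  ultimately show "\<exists>U. openin T U \<and> x0 \<in> U \<and> (\<forall>y\<in>U. g y \<in> Op)" using Uo by blast
qed


lemma cluster_functional:
  assumes FK: "FK_space X T" and fs: "\<And>n. fs n \<in> cdual X T"
    and V: "openin T V" "szero \<in> V" "\<forall>n. \<forall>v\<in>V. cmod (fs n v) \<le> 1"
    and bd: "\<And>y. y \<in> X \<Longrightarrow> bdd_above (range (\<lambda>n. cmod (fs n y)))"
  shows "\<exists>g\<in>cdual X T. \<forall>y\<in>X. \<forall>L. (\<lambda>n. fs n y) \<longlonglongrightarrow> L \<longrightarrow> g y = L"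
proof -
  define B where "B y = (SUP n. cmod (fs n y))" for y
  have Bb: "cmod (fs n y) \<le> B y" if "y \<in> X" for n y
    unfolding B_def using cSUP_upper[of n UNIV "\<lambda>n. cmod (fs n y)"] bd[OF that] by simp
  have "\<exists>g. \<forall>F \<epsilon> m. finite F \<and> F \<subseteq> X \<and> \<epsilon> > 0 \<longrightarrow> (\<exists>n\<ge>m. \<forall>y\<in>F. cmod (fs n y - g y) < \<epsilon>)"
    by (rule cluster[where B=B]) (simp add: Bb)
  then obtain g where P0:
    "\<forall>F \<epsilon> m. finite F \<and> F \<subseteq> X \<and> \<epsilon> > 0 \<longrightarrow> (\<exists>n\<ge>m. \<forall>y\<in>F. cmod (fs n y - g y) < \<epsilon>)"
    by (elim exE)
  have P: "\<exists>n\<ge>m. \<forall>y\<in>F. cmod (fs n y - g y) < \<epsilon>" if "finite F" "F \<subseteq> X" "\<epsilon> > 0" for F \<epsilon> m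
    using P0 that by simp
  have fadd: "fs n (sadd a b) = fs n a + fs n b" if "a \<in> X" "b \<in> X" for n a b
    using fs[of n] that by (auto simp: cdual_def)
  have fsc: "fs n (sscale c a) = c * fs n a" if "a \<in> X" for n a c
    using fs[of n] that by (auto simp: cdual_def)
  have gadd: "\<forall>a\<in>X. \<forall>b\<in>X. g (sadd a b) = g a + g b"
  proof (intro ballI, rule ccontr)
    fix a b assume ab: "a \<in> X" "b \<in> X" and ne: "g (sadd a b) \<noteq> g a + g b"
    define e where "e = cmod (g (sadd a b) - g a - g b)"
    have e: "e > 0" using ne unfolding e_def by (metis diff_diff_eq2 diff_add_cancel zero_less_norm_iff right_minus_eq add.commute)
    have sX: "sadd a b \<in> X" using FK_basic(3)[OF FK] ab by auto
    obtain n where n: "\<forall>y\<in>{a, b, sadd a b}. cmod (fs n y - g y) < e/3"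
      using P[of "{a, b, sadd a b}" "e/3" 0] ab sX e by auto
    have eq: "g (sadd a b) - g a - g b = (g (sadd a b) - fs n (sadd a b)) + (fs n a - g a) + (fs n b - g b)"
      using fadd[OF ab] by simp
    have t1: "e \<le> cmod ((g (sadd a b) - fs n (sadd a b)) + (fs n a - g a)) + cmod (fs n b - g b)"
      unfolding e_def eq by (rule norm_triangle_ineq)
    have t2: "cmod ((g (sadd a b) - fs n (sadd a b)) + (fs n a - g a)) \<le> cmod (g (sadd a b) - fs n (sadd a b)) + cmod (fs n a - g a)"
      by (rule norm_triangle_ineq)
    from t1 t2 have "e \<le> cmod (g (sadd a b) - fs n (sadd a b)) + cmod (fs n a - g a) + cmod (fs n b - g b)"
      by linarith
    moreover have "cmod (g (sadd a b) - fs n (sadd a b)) < e/3"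
      using n by (simp add: norm_minus_commute)
    ultimately show False using n by simp
  qed
  have gsc: "\<forall>c. \<forall>a\<in>X. g (sscale c a) = c * g a"
  proof (intro allI ballI, rule ccontr)
    fix c a assume a: "a \<in> X" and ne: "g (sscale c a) \<noteq> c * g a"
    define e where "e = cmod (g (sscale c a) - c * g a)"
    have e: "e > 0" using ne by (simp add: e_def)
    have sX: "sscale c a \<in> X" using FK_basic(4)[OF FK] a by auto
    define d where "d = e / (2 * (1 + cmod c))"
    have d: "d > 0" using e by (simp add: d_def add_pos_nonneg)
    obtain n where n: "\<forall>y\<in>{a, sscale c a}. cmod (fs n y - g y) < d"
      using P[of "{a, sscale c a}" d 0] a sX d by auto
    have eq: "g (sscale c a) - c * g a = (g (sscale c a) - fs n (sscale c a)) + c * (fs n a - g a)"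
      using fsc[OF a] by (simp add: algebra_simps)
    have "e \<le> cmod (g (sscale c a) - fs n (sscale c a)) + cmod (c * (fs n a - g a))"
      unfolding e_def eq by (rule norm_triangle_ineq)
    then have "e \<le> cmod (g (sscale c a) - fs n (sscale c a)) + cmod c * cmod (fs n a - g a)"
      by (simp add: norm_mult)
    moreover have "cmod (g (sscale c a) - fs n (sscale c a)) < d"
      using n by (simp add: norm_minus_commute)
    moreover have "cmod c * cmod (fs n a - g a) \<le> cmod c * d"
      using n by (intro mult_left_mono) auto
    moreover have "d + cmod c * d < e"
    proof -
      have pos: "1 + cmod c > 0" by (simp add: add_pos_nonneg)
      have "d + cmod c * d = d * (1 + cmod c)" by (simp add: algebra_simps)
      also have "\<dots> = e / 2" unfolding d_def using pos by (simp add: divide_simps)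
      finally have "d + cmod c * d = e / 2" .
      then show ?thesis using e by simp
    qed
    ultimately show False by simp
  qed
  have gV: "\<forall>v\<in>V. cmod (g v) \<le> 1"
  proof (intro ballI, rule ccontr)
    fix v assume v: "v \<in> V" and ne: "\<not> cmod (g v) \<le> 1"
    have vX: "v \<in> X" using v openin_subset[OF V(1)] FK_basic(1)[OF FK] by auto
    obtain n where n: "cmod (fs n v - g v) < cmod (g v) - 1"
      using P[of "{v}" "cmod (g v) - 1" 0] vX ne by auto
    have "cmod (g v) \<le> cmod (fs n v) + cmod (fs n v - g v)"
      using norm_triangle_ineq4[of "fs n v" "fs n v - g v"] by simp
    moreover have "cmod (fs n v) \<le> 1" using V(3) v by blast
    ultimately show False using n by linarith
  qed
  have glim: "\<forall>y\<in>X. \<forall>L. (\<lambda>n. fs n y) \<longlonglongrightarrow> L \<longrightarrow> g y = L"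
  proof (intro ballI allI impI, rule ccontr)
    fix y L assume y: "y \<in> X" and l: "(\<lambda>n. fs n y) \<longlonglongrightarrow> L" and ne: "g y \<noteq> L"
    define e where "e = cmod (g y - L)"
    have e: "e > 0" using ne by (simp add: e_def)
    obtain m where m: "\<forall>n\<ge>m. cmod (fs n y - L) < e/2"
      using LIMSEQ_D[OF l, of "e/2"] e by auto
    obtain n where n: "n \<ge> m" "cmod (fs n y - g y) < e/2"
      using P[of "{y}" "e/2" m] y e by auto
    have "e \<le> cmod (fs n y - g y) + cmod (fs n y - L)"
      unfolding e_def using norm_triangle_ineq4[of "fs n y - L" "fs n y - g y"] by simp
    moreover have "cmod (fs n y - L) < e/2" using m n(1) by blast
    ultimately show False using n(2) by linarith
  qed
  have "continuous_map T euclidean g" by (rule cont_from_bound[OF FK gadd gsc V(1,2) gV])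
  then have "g \<in> cdual X T" using gadd gsc by (simp add: cdual_def)
  then show ?thesis using glim by blast
qed


lemma cmap_cmult: "continuous_map T euclidean f \<Longrightarrow> continuous_map T euclidean (\<lambda>x. (c::complex) * f x)"
  by (simp add: continuous_map_atin tendsto_mult_left)

lemma dmean_cdual:
  assumes FK: "FK_space X T"
  shows "(\<lambda>y. dmean p q (smult x y) n) \<in> cdual X T"
proof -
  have "continuous_map T euclidean (\<lambda>y. dmean p q (smult x y) n)"
    unfolding dmean_def smult_def
    by (intro cmap_cmult continuous_map_sum finite_greaterThanAtMost finite_lessThan
        FK_basic(7)[OF FK])
  moreover have "dmean p q (smult x (sadd a b)) n = dmean p q (smult x a) n + dmean p q (smult x b) n" for a b
  proof -
    have "smult x (sadd a b) = (\<lambda>j. smult x a j + smult x b j)" by (simp add: smult_def sadd_def distrib_left)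
    then show ?thesis by (simp add: dmean_def sum.distrib distrib_left)
  qed
  moreover have "dmean p q (smult x (sscale c a)) n = c * dmean p q (smult x a) n" for a c
  proof -
    have "smult x (sscale c a) = (\<lambda>j. c * smult x a j)" by (simp add: smult_def sscale_def mult.left_commute)
    then show ?thesis by (simp add: dmean_def sum_distrib_left mult.left_commute)
  qed
  ultimately show ?thesis by (simp add: cdual_def)
qed

lemma dmean_delta:
  "dmean p q (smult x (delta k)) n = x k * of_nat (q n - max (p n) k) / of_nat (q n - p n)"
proof -
  have "(\<Sum>k'\<in>{p n<..q n}. \<Sum>j<k'. x j * delta k j) = (\<Sum>k'\<in>{p n<..q n}. if k < k' then x k else 0)"
    by (intro sum.cong refl) (auto simp: delta_def if_distrib sum.delta cong: if_cong)
  also have "\<dots> = (\<Sum>k'\<in>{k'\<in>{p n<..q n}. k < k'}. x k)"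
    by (subst sum.inter_filter) auto
  also have "{k'\<in>{p n<..q n}. k < k'} = {max (p n) k<..q n}" by auto
  finally show ?thesis by (simp add: dmean_def smult_def)
qed


lemma dmean_delta_lim:
  assumes pq: "\<forall>n. p n < q n" and qinf: "filterlim q at_top sequentially"
    and lim: "\<forall>i\<ge>1. (\<lambda>n. (real (q n) - real i + 1) / (real (q n) - real (p n))) \<longlonglongrightarrow> 1"
  shows "(\<lambda>n. dmean p q (smult x (delta k)) n) \<longlonglongrightarrow> x k"
proof -
  define r where "r n = (real (q n) - real (Suc k) + 1) / (real (q n) - real (p n))" for n
  have r: "r \<longlonglongrightarrow> 1" using lim unfolding r_def by auto
  have "(\<lambda>n. x k * of_real (min 1 (r n))) \<longlonglongrightarrow> x k * of_real (min 1 1)"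
    by (intro tendsto_intros r)
  then have t: "(\<lambda>n. x k * of_real (min 1 (r n))) \<longlonglongrightarrow> x k" by simp
  have ev: "eventually (\<lambda>n. k \<le> q n) sequentially"
    using qinf by (simp add: filterlim_at_top)
  have "eventually (\<lambda>n. x k * of_real (min 1 (r n)) = dmean p q (smult x (delta k)) n) sequentially"
    using ev
  proof (rule eventually_mono)
    fix n assume kq: "k \<le> q n"
    have pn: "p n < q n" using pq by auto
    have "real (q n - max (p n) k) = min (real (q n) - real (p n)) (real (q n) - real k)"
      using kq pn by (simp add: of_nat_diff max_def)
    then have "real (q n - max (p n) k) / real (q n - p n) = min 1 (r n)"
      using pn unfolding r_def
      by (simp add: of_nat_diff min_def divide_le_eq_1 field_simps)
    then have "complex_of_real (min 1 (r n)) = of_nat (q n - max (p n) k) / of_nat (q n - p n)"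
      by (metis of_real_divide of_real_of_nat_eq)
    then show "x k * of_real (min 1 (r n)) = dmean p q (smult x (delta k)) n"
      by (simp add: dmean_delta)
  qed
  from Lim_transform_eventually[OF t this] show ?thesis .
qed


lemma delta_phi: "delta j \<in> phi"
proof -
  have "delta j = (\<lambda>i. \<Sum>j'\<in>{j}. 1 * delta j' i)" by simp
  then show ?thesis unfolding phi_def by (intro CollectI exI[of _ "{j}"] exI[of _ "\<lambda>_. 1"]) simp
qed

lemma cdual_lincomb:
  assumes FK: "FK_space X T" and phiX: "phi \<subseteq> X" and h: "h \<in> cdual X T" and fin: "finite F"
  shows "(\<lambda>i. \<Sum>a\<in>F. c a * delta (e a) i) \<in> X \<and>
         h (\<lambda>i. \<Sum>a\<in>F. c a * delta (e a) i) = (\<Sum>a\<in>F. c a * h (delta (e a)))"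
  using fin
proof (induction F rule: finite_induct)
  case empty
  have "(\<lambda>i. \<Sum>a\<in>{}. c a * delta (e a) i) = szero" by (simp add: szero_def)
  then show ?case using FK_basic(2)[OF FK] cdual_zero[OF FK h] by simp
next
  case (insert a F)
  let ?z = "\<lambda>i. \<Sum>a\<in>F. c a * delta (e a) i"
  have dX: "delta (e a) \<in> X" using phiX delta_phi by auto
  have sX: "sscale (c a) (delta (e a)) \<in> X" using FK_basic(4)[OF FK] dX by auto
  have eq: "(\<lambda>i. \<Sum>a\<in>insert a F. c a * delta (e a) i) = sadd (sscale (c a) (delta (e a))) ?z"
    using insert by (simp add: sadd_def sscale_def)
  have "h (sadd (sscale (c a) (delta (e a))) ?z) = h (sscale (c a) (delta (e a))) + h ?z"
    using h sX insert by (auto simp: cdual_def)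
  also have "h (sscale (c a) (delta (e a))) = c a * h (delta (e a))" using h dX by (auto simp: cdual_def)
  finally show ?case using eq insert FK_basic(3)[OF FK] sX by simp
qed

lemma window_mean:
  fixes S :: "nat \<Rightarrow> complex"
  assumes S: "S \<longlonglongrightarrow> s" and pq: "\<forall>n. p n < q n"
    and D: "\<And>B. eventually (\<lambda>n. B \<le> real (q n - p n)) sequentially"
  shows "(\<lambda>n. (1 / of_nat (q n - p n)) * (\<Sum>k\<in>{p n<..q n}. S k)) \<longlonglongrightarrow> s"
proof (rule LIMSEQ_I)
  fix \<epsilon> :: real assume e: "\<epsilon> > 0"
  have "Bseq (\<lambda>k. S k - s)" using S by (intro convergent_imp_Bseq convergentI[OF tendsto_diff[OF S tendsto_const]])
  then obtain M where M: "M > 0" "\<And>k. cmod (S k - s) \<le> M" unfolding Bseq_def by auto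
  obtain N where N: "\<And>k. k \<ge> N \<Longrightarrow> cmod (S k - s) < \<epsilon>/2"
    using LIMSEQ_D[OF S, of "\<epsilon>/2"] e by auto
  have "eventually (\<lambda>n. 2 * real N * M / \<epsilon> + 1 \<le> real (q n - p n)) sequentially" by (rule D)
  then obtain n0 where n0: "\<And>n. n \<ge> n0 \<Longrightarrow> 2 * real N * M / \<epsilon> + 1 \<le> real (q n - p n)"
    unfolding eventually_sequentially by blast
  show "\<exists>no. \<forall>n\<ge>no. cmod ((1 / of_nat (q n - p n)) * (\<Sum>k\<in>{p n<..q n}. S k) - s) < \<epsilon>"
  proof (intro exI allI impI)
    fix n assume "n \<ge> n0"
    note dn = n0[OF this]
    define A where "A = {p n<..q n}"
    define d where "d = real (q n - p n)"
    have dpos: "d > 0" using pq by (simp add: d_def)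
    have cardA: "card A = q n - p n" by (simp add: A_def)
    have "(1 / of_nat (q n - p n)) * (\<Sum>k\<in>A. S k) - s = (1 / of_nat (q n - p n)) * (\<Sum>k\<in>A. (S k - s))"
      using dpos by (simp add: sum_subtractf cardA field_simps d_def)
    then have n1: "cmod ((1 / of_nat (q n - p n)) * (\<Sum>k\<in>A. S k) - s) = (1/d) * cmod (\<Sum>k\<in>A. (S k - s))"
      by (simp add: norm_mult norm_divide d_def)
    have n2: "cmod (\<Sum>k\<in>A. (S k - s)) \<le> (\<Sum>k\<in>A. cmod (S k - s))" by (rule norm_sum)
    have n3: "(\<Sum>k\<in>A. cmod (S k - s)) \<le> (\<Sum>k\<in>A. (if k < N then M else 0) + \<epsilon>/2)"
    proof (intro sum_mono)
      fix k show "cmod (S k - s) \<le> (if k < N then M else 0) + \<epsilon>/2"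
        using M(2)[of k] N[of k] e by (cases "k < N") auto
    qed
    have n4: "(\<Sum>k\<in>A. (if k < N then M else 0) + \<epsilon>/2) = M * real (card {k\<in>A. k < N}) + d * (\<epsilon>/2)"
      by (simp add: sum.distrib sum.inter_filter[symmetric] cardA d_def A_def)
    have n5: "M * real (card {k\<in>A. k < N}) \<le> M * real N"
    proof -
      have "card {k\<in>A. k < N} \<le> card {..<N}" by (intro card_mono) auto
      then show ?thesis using M by simp
    qed
    have n6: "cmod (\<Sum>k\<in>A. (S k - s)) \<le> M * real N + d * (\<epsilon>/2)" using n2 n3 n4 n5 by linarith
    have n7: "(1/d) * cmod (\<Sum>k\<in>A. (S k - s)) \<le> (1/d) * (M * real N + d * (\<epsilon>/2))"
      using n6 dpos by (intro mult_left_mono) auto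
    have n8: "(1/d) * (M * real N + d * (\<epsilon>/2)) = M * real N / d + \<epsilon>/2" using dpos by (simp add: field_simps)
    have n9: "M * real N / d < \<epsilon>/2"
    proof -
      have "2 * real N * M / \<epsilon> < d" using dn by (simp add: d_def)
      then have "2 * real N * M < d * \<epsilon>" using e by (simp add: field_simps)
      then show ?thesis using dpos by (simp add: field_simps)
    qed
    have "cmod ((1 / of_nat (q n - p n)) * (\<Sum>k\<in>A. S k) - s) < \<epsilon>"
    proof -
      have "cmod ((1 / of_nat (q n - p n)) * (\<Sum>k\<in>A. S k) - s) \<le> M * real N / d + \<epsilon>/2"
        using n1 n7 n8 by simp
      then show ?thesis using n9 by linarith
    qed
    then show "cmod ((1 / of_nat (q n - p n)) * (\<Sum>k\<in>{p n<..q n}. S k) - s) < \<epsilon>"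
      by (simp add: A_def)
  qed
qed


lemma window_grows:
  assumes pq: "\<forall>n. p n < q n" and qinf: "filterlim q at_top sequentially"
    and lim: "\<forall>i\<ge>1. (\<lambda>n. (real (q n) - real i + 1) / (real (q n) - real (p n))) \<longlonglongrightarrow> 1"
  shows "eventually (\<lambda>n. B \<le> real (q n - p n)) sequentially"
proof -
  have r: "(\<lambda>n. (real (q n) - real (1::nat) + 1) / (real (q n) - real (p n))) \<longlonglongrightarrow> 1"
    using lim by auto
  have e1: "eventually (\<lambda>n. real (q n) / (real (q n) - real (p n)) < 2) sequentially"
    using order_tendstoD(2)[OF r, of 2] by simp
  have e2: "eventually (\<lambda>n. nat \<lceil>2 * B\<rceil> \<le> q n) sequentially"
    using qinf unfolding filterlim_at_top by blast
  show ?thesis using e1 e2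
  proof (rule eventually_elim2)
    fix n assume a: "real (q n) / (real (q n) - real (p n)) < 2" and b: "nat \<lceil>2 * B\<rceil> \<le> q n"
    have pn: "real (p n) < real (q n)" using pq by auto
    then have "real (q n) < 2 * (real (q n) - real (p n))" using a by (simp add: divide_less_eq)
    moreover have "2 * B \<le> real (q n)"
    proof -
      have "real (nat \<lceil>2 * B\<rceil>) \<le> real (q n)" using b by simp
      then show ?thesis using real_nat_ceiling_ge[of "2*B"] by linarith
    qed
    ultimately show "B \<le> real (q n - p n)" using pn by (simp add: of_nat_diff less_imp_le_nat)
  qed
qed

lemma sect_delta: "sect y k i = (\<Sum>j<k. y j * delta j i)"
  by (simp add: sect_def delta_def if_distrib sum.delta cong: if_cong)


theorem mainTheorem5:
  fixes X :: "seq set" and T :: "seq topology" and p q :: "nat \<Rightarrow> nat"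
  assumes FK: "FK_space X T"
    and phiX: "phi \<subseteq> X"
    and pq: "\<forall>n. p n < q n"
    and qinf: "filterlim q at_top sequentially"
    and lim: "\<forall>i\<ge>1. (\<lambda>n. (real (q n) - real i + 1) / (real (q n) - real (p n))) \<longlonglongrightarrow> 1"
  shows "(beta_dual X \<subseteq> d_dual p q X \<and> d_dual p q X \<subseteq> db_dual p q X
           \<and> db_dual p q X \<subseteq> f_dual X T)
         \<and> (sigmaK_space p q X T \<longrightarrow> f_dual X T = d_dual p q X)
         \<and> (AD_space X T \<longrightarrow> db_dual p q X = d_dual p q X)"
proof -
  note top = FK_basic(1)[OF FK]
  have fsc: "(\<lambda>y. dmean p q (smult x y) n) \<in> cdual X T" for x n by (rule dmean_cdual[OF FK])
  have deltaX: "delta k \<in> X" for k using delta_phi phiX by auto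
  have S1: "beta_dual X \<subseteq> d_dual p q X"
  proof
    fix x assume x: "x \<in> beta_dual X"
    show "x \<in> d_dual p q X" unfolding d_dual_def sigma_s_def
    proof (intro CollectI ballI)
      fix y assume y: "y \<in> X"
      then have sm: "summable (\<lambda>k. x k * y k)" using x by (auto simp: beta_dual_def)
      have "(\<lambda>k. \<Sum>j<k. x j * y j) \<longlonglongrightarrow> suminf (\<lambda>k. x k * y k)"
        using summable_LIMSEQ[OF sm] by simp
      from window_mean[OF this pq window_grows[OF pq qinf lim]]
      show "convergent (dmean p q (smult x y))"
        unfolding convergent_def dmean_def smult_def by blast
    qed
  qed
  have S2: "d_dual p q X \<subseteq> db_dual p q X"
  proof
    fix x assume x: "x \<in> d_dual p q X"
    show "x \<in> db_dual p q X" unfolding db_dual_def sigma_b_def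
    proof (intro CollectI ballI)
      fix y assume "y \<in> X"
      then have "convergent (dmean p q (smult x y))" using x by (auto simp: d_dual_def sigma_s_def)
      then have "Bseq (dmean p q (smult x y))" by (rule convergent_imp_Bseq)
      then obtain K where "\<forall>n. norm (dmean p q (smult x y) n) \<le> K" unfolding Bseq_def by auto
      then show "bdd_above (range (\<lambda>n. norm (dmean p q (smult x y) n)))"
        by (intro bdd_aboveI) auto
    qed
  qed
  have equi: "\<exists>V. openin T V \<and> szero \<in> V \<and> (\<forall>n. \<forall>v\<in>V. cmod (dmean p q (smult x v) n) \<le> 1)"
    if x: "x \<in> db_dual p q X" for x
  proof (rule ubp[OF FK fsc])
    fix y assume "y \<in> X"
    then have "bdd_above (range (\<lambda>n. norm (dmean p q (smult x y) n)))"
      using x by (auto simp: db_dual_def sigma_b_def)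
    then obtain M where "\<forall>z\<in>range (\<lambda>n. norm (dmean p q (smult x y) n)). z \<le> M"
      unfolding bdd_above_def by blast
    then show "\<exists>M. \<forall>n. cmod (dmean p q (smult x y) n) \<le> M" by auto
  qed
  have bddb: "bdd_above (range (\<lambda>n. cmod (dmean p q (smult x y) n)))"
    if "x \<in> db_dual p q X" "y \<in> X" for x y
    using that by (auto simp: db_dual_def sigma_b_def)
  have S3: "db_dual p q X \<subseteq> f_dual X T"
  proof
    fix x assume x: "x \<in> db_dual p q X"
    obtain V where V: "openin T V" "szero \<in> V" "\<forall>n. \<forall>v\<in>V. cmod (dmean p q (smult x v) n) \<le> 1"
      using equi[OF x] by blast
    obtain g where g: "g \<in> cdual X T" "\<forall>y\<in>X. \<forall>L. (\<lambda>n. dmean p q (smult x y) n) \<longlonglongrightarrow> L \<longrightarrow> g y = L"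
      using cluster_functional[OF FK fsc V bddb[OF x]] by blast
    have "g (delta k) = x k" for k
      using g(2) deltaX dmean_delta_lim[OF pq qinf lim] by blast
    then have "x = (\<lambda>k. g (delta k))" by auto
    then show "x \<in> f_dual X T" using g(1) unfolding f_dual_def by blast
  qed
  have P2: "f_dual X T \<subseteq> d_dual p q X" if K: "sigmaK_space p q X T"
  proof
    fix x assume "x \<in> f_dual X T"
    then obtain h where h: "h \<in> cdual X T" and xh: "x = (\<lambda>k. h (delta k))" unfolding f_dual_def by blast
    show "x \<in> d_dual p q X" unfolding d_dual_def sigma_s_def
    proof (intro CollectI ballI)
      fix y assume y: "y \<in> X"
      define M where "M n = (\<lambda>i. (1 / of_nat (q n - p n)) * (\<Sum>k\<in>{p n<..q n}. sect y k i))" for n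
      have "limitin T M y sequentially" using K y unfolding sigmaK_space_def M_def by blast
      from continuous_map_limit[OF _ this, of euclidean h] h
      have lh: "(\<lambda>n. h (M n)) \<longlonglongrightarrow> h y" by (auto simp: cdual_def o_def)
      have "h (M n) = dmean p q (smult x y) n" for n
      proof -
        define Sg where "Sg = Sigma {p n<..q n} (\<lambda>k. {..<k})"
        define c where "c a = (1 / of_nat (q n - p n)) * y (snd a)" for a :: "nat \<times> nat"
        have fin: "finite Sg" unfolding Sg_def by (intro finite_SigmaI) auto
        have "M n = (\<lambda>i. \<Sum>a\<in>Sg. c a * delta (snd a) i)"
          unfolding M_def Sg_def c_def sect_delta
          by (auto simp: sum_distrib_left sum.Sigma split_beta mult.assoc)
        then have "h (M n) = (\<Sum>a\<in>Sg. c a * h (delta (snd a)))"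
          using cdual_lincomb[OF FK phiX h fin, of c snd] by simp
        also have "\<dots> = dmean p q (smult x y) n"
          unfolding dmean_def smult_def Sg_def c_def xh
          by (auto simp: sum_distrib_left sum.Sigma split_beta mult.assoc mult.commute)
        finally show ?thesis .
      qed
      with lh show "convergent (dmean p q (smult x y))" unfolding convergent_def by auto
    qed
  qed
  have P3: "db_dual p q X \<subseteq> d_dual p q X" if AD: "AD_space X T"
  proof
    fix x assume x: "x \<in> db_dual p q X"
    let ?f = "\<lambda>n y. dmean p q (smult x y) n"
    obtain V where V: "openin T V" "szero \<in> V" "\<forall>n. \<forall>v\<in>V. cmod (?f n v) \<le> 1"
      using equi[OF x] by blast
    show "x \<in> d_dual p q X" unfolding d_dual_def sigma_s_def
    proof (intro CollectI ballI)
      fix y assume y: "y \<in> X"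
      have "Cauchy (\<lambda>n. ?f n y)"
      proof (rule metric_CauchyI)
        fix \<epsilon> :: real assume e: "\<epsilon> > 0"
        define c :: complex where "c = of_real (3 / \<epsilon>)"
        define U where "U = {u \<in> topspace T. sscale c (sadd (sscale (-1) u) y) \<in> V}"
        have "continuous_map T T (\<lambda>u. sscale c (sadd (sscale (-1) u) y))"
          using continuous_map_compose[OF continuous_map_compose[OF cont_scale[OF FK] cont_trans[OF FK y]] cont_scale[OF FK]]
          by (simp add: o_def)
        then have Uo: "openin T U" unfolding U_def using V(1) by (rule openin_continuous_map_preimage)
        have "sscale c (sadd (sscale (-1) y) y) = szero" by (simp add: sscale_def sadd_def szero_def)
        then have yU: "y \<in> U" using y V top by (simp add: U_def)
        have "y \<in> T closure_of phi" using AD y top by (simp add: AD_space_def)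
        then obtain z where z: "z \<in> phi" "z \<in> U" using Uo yU unfolding in_closure_of by blast
        then obtain F cc where F: "finite F" "z = (\<lambda>i. \<Sum>j\<in>F. cc j * delta j i)" unfolding phi_def by blast
        have zX: "z \<in> X" using z phiX by auto
        have fz: "?f n z = (\<Sum>j\<in>F. cc j * ?f n (delta j))" for n
          using cdual_lincomb[OF FK phiX fsc F(1), of cc "\<lambda>j. j"] F(2) by simp
        have "(\<lambda>n. \<Sum>j\<in>F. cc j * ?f n (delta j)) \<longlonglongrightarrow> (\<Sum>j\<in>F. cc j * x j)"
          by (intro tendsto_intros dmean_delta_lim[OF pq qinf lim])
        then have "Cauchy (\<lambda>n. ?f n z)" unfolding fz by (rule LIMSEQ_imp_Cauchy)
        then obtain N where N: "\<forall>m\<ge>N. \<forall>n\<ge>N. dist (?f m z) (?f n z) < \<epsilon>/3"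
          using e unfolding Cauchy_def by (meson divide_pos_pos zero_less_numeral)
        have close: "cmod (?f n y - ?f n z) \<le> \<epsilon>/3" for n
        proof -
          have mz: "sscale (-1) z \<in> X" using FK_basic(4)[OF FK] zX by auto
          have dX: "sadd (sscale (-1) z) y \<in> X" using FK_basic(3)[OF FK] mz y by auto
          have "sadd (sscale (-1) z) y = sadd y (sscale (-1) z)" by (auto simp: sadd_def)
          then have "?f n (sadd (sscale (-1) z) y) = ?f n y - ?f n z"
            using cdual_diff[OF FK fsc y zX] by simp
          moreover have "?f n (sscale c (sadd (sscale (-1) z) y)) = c * ?f n (sadd (sscale (-1) z) y)"
            using fsc[of x n] dX by (auto simp: cdual_def)
          moreover have "cmod (?f n (sscale c (sadd (sscale (-1) z) y))) \<le> 1"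
            using z(2) V(3) by (auto simp: U_def)
          moreover have "cmod c = 3 / \<epsilon>" unfolding c_def norm_of_real using e by simp
          ultimately have "(3/\<epsilon>) * cmod (?f n y - ?f n z) \<le> 1" by (simp add: norm_mult)
          then show ?thesis using e by (simp add: field_simps)
        qed
        show "\<exists>N. \<forall>m\<ge>N. \<forall>n\<ge>N. dist (?f m y) (?f n y) < \<epsilon>"
        proof (intro exI allI impI)
          fix m n assume mn: "m \<ge> N" "n \<ge> N"
          have "dist (?f m y) (?f n y) \<le> dist (?f m y) (?f m z) + dist (?f m z) (?f n y)"
            by (rule dist_triangle)
          also have "dist (?f m z) (?f n y) \<le> dist (?f m z) (?f n z) + dist (?f n z) (?f n y)"
            by (rule dist_triangle)
          finally have "dist (?f m y) (?f n y) \<le> dist (?f m y) (?f m z) + (dist (?f m z) (?f n z) + dist (?f n z) (?f n y))"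
            by simp
          moreover have "dist (?f m y) (?f m z) \<le> \<epsilon>/3" using close[of m] by (simp add: dist_norm)
          moreover have "dist (?f n z) (?f n y) \<le> \<epsilon>/3" using close[of n] by (simp add: dist_norm norm_minus_commute)
          moreover have "dist (?f m z) (?f n z) < \<epsilon>/3" using N mn by blast
          ultimately show "dist (?f m y) (?f n y) < \<epsilon>" by linarith
        qed
      qed
      then show "convergent (dmean p q (smult x y))" using Cauchy_convergent_iff by blast
    qed
  qed
  show ?thesis using S1 S2 S3 P2 P3 by blast
qed

end
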